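(* Let $\kappa\in\mathbb{C}$, $l\ge N-1$, $\mu=(\mu_1,\ldots,\mu_{N-1})$ and $\lambda=(\lambda_1,\ldots,\lambda_l)$. Then \[ \Delta(\mu,\lambda)^{-\kappa}\, D_{\mu_{N-1}}(-\kappa)\cdots D_{\mu_1}(-\kappa)\,\Delta(\mu,\lambda)^{\kappa}=\kappa^{N-1}Z_1(\mu,\lambda), \] where $Z_1(\mu,\lambda)$ is the coefficient of $x_1\cdots x_l$ in \[ \frac{1}{(l-N+1)!}\prod_{j=1}^l\Big(\sum_{i=1}^{N-1}\frac{x_i}{\mu_i-\lambda_j}+x_N+\cdots+x_l\Big). \]
   Context: $\Delta(\mu,\lambda)=\prod_{i,j}(\mu_i-\lambda_j)$, which is symmetric in $\mu$. The rational Dunkl operators in $\mu$ are $D_{\mu_i}(c)=\partial_{\mu_i}+c\sum_{j\neq i}\frac{1}{\mu_i-\mu_j}(1-s_{ij})$, $s_{ij}$ exchanging $\mu_i,\mu_j$. They are applied successively (first $D_{\mu_1}$) to functions of the form $\Delta(\mu,\lambda)^\kappa R(\mu)$ with $R$ rational, where $\Delta(\mu,\lambda)^\kappa$ is a fixed branch and $s_{ij}(\Delta(\mu,\lambda)^\kappa R)=\Delta(\mu,\lambda)^\kappa s_{ij}(R)$. *)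

theory Defs
  imports "HOL-Analysis.Analysis"
begin

text \<open>Points are functions nat => complex; mu uses indices 1..n (n = N-1),
  lambda uses indices 1..l.\<close>

definition Delta :: "nat \<Rightarrow> nat \<Rightarrow> (nat \<Rightarrow> complex) \<Rightarrow> (nat \<Rightarrow> complex) \<Rightarrow> complex" where
  "Delta n l mu lam = (\<Prod>i\<in>{1..n}. \<Prod>j\<in>{1..l}. mu i - lam j)"

definition swap_coords :: "(nat \<Rightarrow> complex) \<Rightarrow> nat \<Rightarrow> nat \<Rightarrow> (nat \<Rightarrow> complex)" where
  "swap_coords mu i j = mu(i := mu j, j := mu i)"

definition dunkl :: "nat \<Rightarrow> complex \<Rightarrow> nat \<Rightarrow> ((nat \<Rightarrow> complex) \<Rightarrow> complex)
    \<Rightarrow> (nat \<Rightarrow> complex) \<Rightarrow> complex" where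
  "dunkl n c i F mu =
     deriv (\<lambda>t. F (mu(i := t))) (mu i)
     + c * (\<Sum>j\<in>{1..n} - {i}. (F mu - F (swap_coords mu i j)) / (mu i - mu j))"

text \<open>dunkl_seq n c k F = D_{mu_k}(c) ... D_{mu_1}(c) F  (D_{mu_1} applied first).\<close>
fun dunkl_seq :: "nat \<Rightarrow> complex \<Rightarrow> nat \<Rightarrow> ((nat \<Rightarrow> complex) \<Rightarrow> complex)
    \<Rightarrow> (nat \<Rightarrow> complex) \<Rightarrow> complex" where
  "dunkl_seq n c 0 F = F"
| "dunkl_seq n c (Suc k) F = dunkl n c (Suc k) (dunkl_seq n c k F)"

text \<open>Coefficient of the monomial prod_k x_k^(alpha k) (k in 1..l) in the product
  prod_{j=1..l} (sum_{k=1..l} a j k * x_k), obtained by expanding the product.\<close>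
definition lin_prod_coeff :: "nat \<Rightarrow> (nat \<Rightarrow> nat \<Rightarrow> complex) \<Rightarrow> (nat \<Rightarrow> nat) \<Rightarrow> complex" where
  "lin_prod_coeff l a alpha =
     (\<Sum>f\<in>{f. f \<in> {1..l} \<rightarrow>\<^sub>E {1..l} \<and> (\<forall>k\<in>{1..l}. card {j\<in>{1..l}. f j = k} = alpha k)}.
        \<Prod>j\<in>{1..l}. a j (f j))"

text \<open>Coefficient of x_k in the j-th factor sum_{i<N} x_i/(mu_i - lambda_j) + x_N + ... + x_l.\<close>
definition Z1_factor_coeff :: "nat \<Rightarrow> (nat \<Rightarrow> complex) \<Rightarrow> (nat \<Rightarrow> complex) \<Rightarrow> nat \<Rightarrow> nat \<Rightarrow> complex" where
  "Z1_factor_coeff N mu lam j k = (if k \<le> N - 1 then 1 / (mu k - lam j) else 1)"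

definition Z1 :: "nat \<Rightarrow> nat \<Rightarrow> (nat \<Rightarrow> complex) \<Rightarrow> (nat \<Rightarrow> complex) \<Rightarrow> complex" where
  "Z1 N l mu lam =
     lin_prod_coeff l (Z1_factor_coeff N mu lam) (\<lambda>_. 1) / of_nat (fact (l - (N - 1)))"

end

theory Submission
  imports Defs "HOL-Combinatorics.Permutations"
begin


definition Pm :: "nat \<Rightarrow> (nat \<Rightarrow> nat) set" where
  "Pm l = {f. f \<in> {1..l} \<rightarrow>\<^sub>E {1..l} \<and> (\<forall>k\<in>{1..l}. card {j\<in>{1..l}. f j = k} = 1)}"

lemma Pm_iff: "f \<in> Pm l \<longleftrightarrow> f \<in> extensional {1..l} \<and> bij_betw f {1..l} {1..l}"
proof
  assume f: "f \<in> Pm l"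
  hence E: "f \<in> {1..l} \<rightarrow>\<^sub>E {1..l}" and C: "\<forall>k\<in>{1..l}. card {j\<in>{1..l}. f j = k} = 1"
    by (auto simp: Pm_def)
  have inj: "inj_on f {1..l}"
  proof (rule inj_onI)
    fix a b assume a: "a \<in> {1..l}" and b: "b \<in> {1..l}" and ab: "f a = f b"
    have "f a \<in> {1..l}" using E a by auto
    then have "card {j\<in>{1..l}. f j = f a} = 1" using C by auto
    then obtain x where "{j\<in>{1..l}. f j = f a} = {x}" by (rule card_1_singletonE)
    moreover have "a \<in> {j\<in>{1..l}. f j = f a}" "b \<in> {j\<in>{1..l}. f j = f a}" using a b ab by auto
    ultimately show "a = b" by auto
  qed
  have surj: "f ` {1..l} = {1..l}"
  proof
    show "f ` {1..l} \<subseteq> {1..l}" using E by auto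
    show "{1..l} \<subseteq> f ` {1..l}"
    proof
      fix k assume k: "k \<in> {1..l}"
      then have "card {j\<in>{1..l}. f j = k} = 1" using C by auto
      then obtain x where "{j\<in>{1..l}. f j = k} = {x}" by (rule card_1_singletonE)
      then show "k \<in> f ` {1..l}" by force
    qed
  qed
  show "f \<in> extensional {1..l} \<and> bij_betw f {1..l} {1..l}"
    using E inj surj by (auto simp: bij_betw_def PiE_def)
next
  assume a: "f \<in> extensional {1..l} \<and> bij_betw f {1..l} {1..l}"
  then have E: "f \<in> {1..l} \<rightarrow>\<^sub>E {1..l}" by (auto simp: bij_betw_def PiE_def)
  have "card {j\<in>{1..l}. f j = k} = 1" if k: "k \<in> {1..l}" for k
  proof -
    have "k \<in> f ` {1..l}" using a k by (simp add: bij_betw_def)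
    then obtain x where x: "x \<in> {1..l}" "f x = k" by blast
    have inj: "inj_on f {1..l}" using a by (simp add: bij_betw_def)
    have "{j\<in>{1..l}. f j = k} = {x}"
    proof (intro equalityI subsetI)
      fix y assume "y \<in> {j\<in>{1..l}. f j = k}"
      then have "y \<in> {1..l}" "f y = f x" using x by auto
      then show "y \<in> {x}" using inj x(1) inj_onD by fastforce
    qed (use x in auto)
    then show ?thesis by simp
  qed
  then show "f \<in> Pm l" using E by (auto simp: Pm_def)
qed

lemma finite_Pm: "finite (Pm l)"
proof -
  have "Pm l \<subseteq> {1..l} \<rightarrow>\<^sub>E {1..l}" by (auto simp: Pm_def)
  moreover have "finite ({1..l::nat} \<rightarrow>\<^sub>E {1..l})" by (rule finite_PiE) auto
  ultimately show ?thesis by (rule finite_subset)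
qed

lemma card_Pm: "card (Pm l) = fact l"
proof -
  have "bij_betw (\<lambda>p. restrict p {1..l}) {p. p permutes {1..l}} (Pm l)"
  proof (rule bij_betw_byWitness[where f'="\<lambda>f j. if j \<in> {1..l} then f j else j"])
    show "\<forall>a\<in>{p. p permutes {1..l}}. (\<lambda>j. if j \<in> {1..l} then restrict a {1..l} j else j) = a"
    proof
      fix a assume "a \<in> {p. p permutes {1..l}}"
      then have "\<forall>x. x \<notin> {1..l} \<longrightarrow> a x = x" by (simp add: permutes_def)
      then show "(\<lambda>j. if j \<in> {1..l} then restrict a {1..l} j else j) = a"
        by (simp add: fun_eq_iff)
    qed
    show "\<forall>a'\<in>Pm l. restrict (\<lambda>j. if j \<in> {1..l} then a' j else j) {1..l} = a'"
    proof
      fix a' assume "a' \<in> Pm l"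
      then have "a' \<in> extensional {1..l}" by (simp add: Pm_iff)
      then show "restrict (\<lambda>j. if j \<in> {1..l} then a' j else j) {1..l} = a'"
        by (simp add: fun_eq_iff extensional_def)
    qed
    show "(\<lambda>p. restrict p {1..l}) ` {p. p permutes {1..l}} \<subseteq> Pm l"
    proof
      fix g assume "g \<in> (\<lambda>p. restrict p {1..l}) ` {p. p permutes {1..l}}"
      then obtain p where p: "p permutes {1..l}" "g = restrict p {1..l}" by auto
      have "bij_betw p {1..l} {1..l}" using p by (simp add: permutes_imp_bij)
      moreover have "bij_betw g {1..l} {1..l} = bij_betw p {1..l} {1..l}"
        by (rule bij_betw_cong) (simp add: p)
      ultimately have "bij_betw g {1..l} {1..l}" by simp
      then show "g \<in> Pm l" using p by (simp add: Pm_iff)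
    qed
    show "(\<lambda>f j. if j \<in> {1..l} then f j else j) ` Pm l \<subseteq> {p. p permutes {1..l}}"
    proof
      fix g assume "g \<in> (\<lambda>f j. if j \<in> {1..l} then f j else j) ` Pm l"
      then obtain f where f: "f \<in> Pm l" "g = (\<lambda>j. if j \<in> {1..l} then f j else j)" by auto
      have "bij_betw f {1..l} {1..l}" using f by (simp add: Pm_iff)
      moreover have "bij_betw g {1..l} {1..l} = bij_betw f {1..l} {1..l}"
        by (rule bij_betw_cong) (simp add: f)
      ultimately have "bij_betw g {1..l} {1..l}" by simp
      then show "g \<in> {p. p permutes {1..l}}" using f by (auto intro!: bij_imp_permutes)
    qed
  qed
  then have "card (Pm l) = card {p. p permutes {1..l::nat}}" by (simp add: bij_betw_same_card)
  also have "\<dots> = fact l" by (rule card_permutations) auto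
  finally show ?thesis .
qed

lemma Pm_range: "f \<in> Pm l \<Longrightarrow> j \<in> {1..l} \<Longrightarrow> f j \<in> {1..l}"
  by (auto simp: Pm_def)

lemma Pm_fiber: assumes "f \<in> Pm l" "k \<in> {1..l}"
  obtains s where "s \<in> {1..l}" "f s = k" "{j\<in>{1..l}. f j = k} = {s}"
proof -
  have "card {j\<in>{1..l}. f j = k} = 1" using assms by (auto simp: Pm_def)
  then obtain x where x: "{j\<in>{1..l}. f j = k} = {x}" by (rule card_1_singletonE)
  then show ?thesis using that by blast
qed

definition htr :: "nat \<Rightarrow> nat \<Rightarrow> nat \<Rightarrow> (nat \<Rightarrow> nat) \<Rightarrow> (nat \<Rightarrow> nat)" where
  "htr l a b f = restrict (Transposition.transpose a b \<circ> f) {1..l}"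

lemma htr_Pm: assumes "a \<in> {1..l}" "b \<in> {1..l}" "f \<in> Pm l" shows "htr l a b f \<in> Pm l"
proof -
  have "bij_betw f {1..l} {1..l}" using assms by (simp add: Pm_iff)
  moreover have "bij_betw (Transposition.transpose a b) {1..l} {1..l}"
    using assms by (simp add: permutes_imp_bij permutes_swap_id)
  ultimately have "bij_betw (Transposition.transpose a b \<circ> f) {1..l} {1..l}"
    by (rule bij_betw_trans)
  moreover have "bij_betw (htr l a b f) {1..l} {1..l} = bij_betw (Transposition.transpose a b \<circ> f) {1..l} {1..l}"
    unfolding htr_def by (rule bij_betw_cong) simp
  ultimately have "bij_betw (htr l a b f) {1..l} {1..l}" by simp
  then show ?thesis by (simp add: Pm_iff htr_def)
qed

lemma htr_htr: assumes "f \<in> Pm l" shows "htr l a b (htr l a b f) = f"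
  using assms by (auto simp: htr_def fun_eq_iff Pm_iff extensional_def transpose_involutory)




lemma sum_split_filter:
  assumes "finite A" shows "sum g A = sum g {x\<in>A. P x} + sum g {x\<in>A. \<not> P x}"
proof -
  have "A = {x\<in>A. P x} \<union> {x\<in>A. \<not> P x}" by auto
  then have "sum g A = sum g ({x\<in>A. P x} \<union> {x\<in>A. \<not> P x})" by simp
  also have "\<dots> = sum g {x\<in>A. P x} + sum g {x\<in>A. \<not> P x}"
    by (rule sum.union_disjoint) (use assms in auto)
  finally show ?thesis .
qed

definition PP :: "nat \<Rightarrow> (nat \<Rightarrow> complex) \<Rightarrow> nat \<Rightarrow> (nat \<Rightarrow> complex) \<Rightarrow> (nat \<Rightarrow> nat) \<Rightarrow> complex" where
  "PP l lam k m f = (\<Prod>j\<in>{j\<in>{1..l}. f j \<le> k}. 1 / (m (f j) - lam j))"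

definition GG :: "nat \<Rightarrow> (nat \<Rightarrow> complex) \<Rightarrow> nat \<Rightarrow> (nat \<Rightarrow> complex) \<Rightarrow> complex" where
  "GG l lam k m = (\<Sum>f\<in>Pm l. PP l lam k m f) / of_nat (fact (l - k))"

definition fib :: "nat \<Rightarrow> (nat \<Rightarrow> nat) \<Rightarrow> nat \<Rightarrow> nat set" where
  "fib l f r = {s\<in>{1..l}. f s = r}"

lemma PP_Suc:
  assumes f: "f \<in> Pm l" and k: "Suc k \<le> l"
  shows "PP l lam (Suc k) m f = PP l lam k m f * (\<Sum>s\<in>fib l f (Suc k). 1 / (m (Suc k) - lam s))"
proof -
  have "Suc k \<in> {1..l}" using k by simp
  then obtain s0 where s0: "s0 \<in> {1..l}" "f s0 = Suc k" "{j\<in>{1..l}. f j = Suc k} = {s0}"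
    by (rule Pm_fiber[OF f])
  have S: "{j\<in>{1..l}. f j \<le> Suc k} = insert s0 {j\<in>{1..l}. f j \<le> k}"
  proof (intro equalityI subsetI)
    fix x assume x: "x \<in> {j\<in>{1..l}. f j \<le> Suc k}"
    show "x \<in> insert s0 {j\<in>{1..l}. f j \<le> k}"
    proof (cases "f x = Suc k")
      case True
      then have "x \<in> {j\<in>{1..l}. f j = Suc k}" using x by simp
      then have "x = s0" using s0(3) by blast
      then show ?thesis by simp
    next
      case False
      then show ?thesis using x by simp
    qed
  qed (use s0 in auto)
  have "PP l lam (Suc k) m f = 1 / (m (f s0) - lam s0) * PP l lam k m f"
    unfolding PP_def S using s0 by (subst prod.insert) auto
  moreover have "fib l f (Suc k) = {s0}" using s0 by (simp add: fib_def)
  ultimately show ?thesis using s0 by simp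
qed

lemma transp_big:
  assumes "k < r" shows "Transposition.transpose r (Suc k) y \<le> k \<longleftrightarrow> y \<le> k"
    and "y \<le> k \<Longrightarrow> Transposition.transpose r (Suc k) y = y"
  using assms by (auto simp: Transposition.transpose_def)

lemma PP_htr:
  assumes f: "f \<in> Pm l" and r: "k < r"
  shows "PP l lam k m (htr l r (Suc k) f) = PP l lam k m f"
proof -
  have S: "{j\<in>{1..l}. htr l r (Suc k) f j \<le> k} = {j\<in>{1..l}. f j \<le> k}"
    using transp_big(1)[OF r] by (auto simp: htr_def)
  show ?thesis unfolding PP_def S
    by (rule prod.cong) (auto simp: htr_def transp_big(2)[OF r])
qed

lemma fib_htr:
  assumes r: "k < r"
  shows "fib l (htr l r (Suc k) f) (Suc k) = fib l f r"
  using r by (auto simp: fib_def htr_def Transposition.transpose_def)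

lemma sym_sum:
  assumes r: "r \<in> {Suc k..l}"
  shows "(\<Sum>f\<in>Pm l. PP l lam k m f * (\<Sum>s\<in>fib l f r. c s))
       = (\<Sum>f\<in>Pm l. PP l lam k m f * (\<Sum>s\<in>fib l f (Suc k). c s))"
proof (rule sum.reindex_bij_witness[where i="htr l r (Suc k)" and j="htr l r (Suc k)"])
  have a: "r \<in> {1..l}" "Suc k \<in> {1..l}" using r by auto
  show "\<And>a. a \<in> Pm l \<Longrightarrow> htr l r (Suc k) (htr l r (Suc k) a) = a" by (rule htr_htr)
  show "\<And>a. a \<in> Pm l \<Longrightarrow> htr l r (Suc k) a \<in> Pm l" using a by (simp add: htr_Pm)
  show "\<And>a. a \<in> Pm l \<Longrightarrow> htr l r (Suc k) (htr l r (Suc k) a) = a" by (rule htr_htr)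
  show "\<And>a. a \<in> Pm l \<Longrightarrow> htr l r (Suc k) a \<in> Pm l" using a by (simp add: htr_Pm)
  show "\<And>a. a \<in> Pm l \<Longrightarrow>
         PP l lam k m (htr l r (Suc k) a) * sum c (fib l (htr l r (Suc k) a) (Suc k)) =
         PP l lam k m a * sum c (fib l a r)"
    using r by (simp add: PP_htr fib_htr)
qed

lemma group_low:
  assumes f: "f \<in> Pm l"
  shows "(\<Sum>j\<in>{1..k}. \<Sum>s\<in>fib l f j. c s) = (\<Sum>s\<in>{s\<in>{1..l}. f s \<le> k}. c s)"
proof -
  have "(\<Sum>j\<in>{1..k}. sum c {x\<in>{s\<in>{1..l}. f s \<le> k}. f x = j}) = sum c {s\<in>{1..l}. f s \<le> k}"
    by (rule sum.group) (use Pm_range[OF f] in force)+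
  moreover have "\<And>j. j \<in> {1..k} \<Longrightarrow> {x\<in>{s\<in>{1..l}. f s \<le> k}. f x = j} = fib l f j"
    by (auto simp: fib_def)
  ultimately show ?thesis by simp
qed

lemma group_high:
  assumes f: "f \<in> Pm l"
  shows "(\<Sum>j\<in>{Suc k..l}. \<Sum>s\<in>fib l f j. c s) = (\<Sum>s\<in>{s\<in>{1..l}. \<not> f s \<le> k}. c s)"
proof -
  have "(\<Sum>j\<in>{Suc k..l}. sum c {x\<in>{s\<in>{1..l}. \<not> f s \<le> k}. f x = j}) = sum c {s\<in>{1..l}. \<not> f s \<le> k}"
    by (rule sum.group) (use Pm_range[OF f] in force)+
  moreover have "\<And>j. j \<in> {Suc k..l} \<Longrightarrow> {x\<in>{s\<in>{1..l}. \<not> f s \<le> k}. f x = j} = fib l f j"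
    by (auto simp: fib_def)
  ultimately show ?thesis by simp
qed




lemma comb:
  assumes k: "Suc k \<le> l" and c: "c = (\<lambda>s. 1 / (m (Suc k) - lam s))"
  shows "GG l lam k m * (\<Sum>s\<in>{1..l}. c s)
     - (\<Sum>j\<in>{1..k}. (\<Sum>f\<in>Pm l. PP l lam k m f * (\<Sum>s\<in>fib l f j. c s)) / of_nat (fact (l-k)))
     = GG l lam (Suc k) m"
proof -
  define F :: complex where "F = of_nat (fact (l-k))"
  define low where "low f = (\<Sum>s\<in>{s\<in>{1..l}. f s \<le> k}. c s)" for f :: "nat \<Rightarrow> nat"
  define high where "high f = (\<Sum>s\<in>{s\<in>{1..l}. \<not> f s \<le> k}. c s)" for f :: "nat \<Rightarrow> nat"
  define Y where "Y = (\<Sum>f\<in>Pm l. PP l lam k m f * (\<Sum>s\<in>fib l f (Suc k). c s))"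
  have 1: "(\<Sum>j\<in>{1..k}. (\<Sum>f\<in>Pm l. PP l lam k m f * (\<Sum>s\<in>fib l f j. c s)) / F)
        = (\<Sum>f\<in>Pm l. PP l lam k m f * low f) / F"
  proof -
    have "(\<Sum>j\<in>{1..k}. (\<Sum>f\<in>Pm l. PP l lam k m f * (\<Sum>s\<in>fib l f j. c s)))
        = (\<Sum>f\<in>Pm l. \<Sum>j\<in>{1..k}. PP l lam k m f * (\<Sum>s\<in>fib l f j. c s))"
      by (rule sum.swap)
    also have "\<dots> = (\<Sum>f\<in>Pm l. PP l lam k m f * low f)"
      by (rule sum.cong[OF refl]) (simp only: sum_distrib_left[symmetric] low_def group_low)
    finally show ?thesis by (simp add: sum_divide_distrib[symmetric])
  qed
  have 2: "GG l lam k m * (\<Sum>s\<in>{1..l}. c s) = (\<Sum>f\<in>Pm l. PP l lam k m f * (low f + high f)) / F"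
  proof -
    have "\<And>f. (\<Sum>s\<in>{1..l}. c s) = low f + high f"
      unfolding low_def high_def by (rule sum_split_filter) simp
    then show ?thesis unfolding GG_def F_def
      by (simp add: sum_distrib_right)
  qed
  have 3: "(\<Sum>f\<in>Pm l. PP l lam k m f * high f) = of_nat (l - k) * Y"
  proof -
    have "(\<Sum>f\<in>Pm l. PP l lam k m f * high f)
        = (\<Sum>f\<in>Pm l. \<Sum>r\<in>{Suc k..l}. PP l lam k m f * (\<Sum>s\<in>fib l f r. c s))"
      by (rule sum.cong[OF refl]) (simp only: sum_distrib_left[symmetric] high_def group_high)
    also have "\<dots> = (\<Sum>r\<in>{Suc k..l}. \<Sum>f\<in>Pm l. PP l lam k m f * (\<Sum>s\<in>fib l f r. c s))"
      by (rule sum.swap)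
    also have "\<dots> = (\<Sum>r\<in>{Suc k..l}. Y)"
      unfolding Y_def by (rule sum.cong[OF refl]) (rule sym_sum)
    also have "\<dots> = of_nat (l - k) * Y" by simp
    finally show ?thesis .
  qed
  have 4: "Y = (\<Sum>f\<in>Pm l. PP l lam (Suc k) m f)"
    unfolding Y_def c by (rule sum.cong[OF refl]) (simp only: PP_Suc[OF _ k])
  have 5: "F = of_nat (l - k) * of_nat (fact (l - Suc k))"
  proof -
    have "l - k = Suc (l - Suc k)" using k by simp
    then have "(fact (l - k) :: nat) = (l - k) * fact (l - Suc k)"
      by (metis fact_Suc of_nat_id)
    then show ?thesis unfolding F_def by (metis of_nat_fact of_nat_mult)
  qed
  have "GG l lam k m * (\<Sum>s\<in>{1..l}. c s)
     - (\<Sum>j\<in>{1..k}. (\<Sum>f\<in>Pm l. PP l lam k m f * (\<Sum>s\<in>fib l f j. c s)) / F)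
     = (\<Sum>f\<in>Pm l. PP l lam k m f * high f) / F"
    unfolding 1 2 by (simp add: distrib_left sum.distrib add_divide_distrib)
  also have "\<dots> = Y / of_nat (fact (l - Suc k))"
    unfolding 3 5 using k by simp
  also have "\<dots> = GG l lam (Suc k) m" unfolding 4 GG_def ..
  finally show ?thesis unfolding F_def .
qed




lemma alg_aux:
  fixes x y z R :: complex
  assumes "x - z \<noteq> 0" "y - z \<noteq> 0" "y - x \<noteq> 0"
  shows "(1 / (x - z) * R - 1 / (y - z) * R) / (y - x) = 1 / (x - z) * R * (1 / (y - z))"
proof -
  have "1 / (x - z) * R - 1 / (y - z) * R = R * (y - x) / ((x - z) * (y - z))"
    using assms by (simp add: field_simps)
  then show ?thesis using assms by simp
qed

lemma PP_swap_diff: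
  assumes f: "f \<in> Pm l" and j: "j \<in> {1..k}" and kl: "Suc k \<le> l"
    and ne: "m (Suc k) \<noteq> m j" and nl: "\<forall>s\<in>{1..l}. m j \<noteq> lam s \<and> m (Suc k) \<noteq> lam s"
  shows "(PP l lam k m f - PP l lam k (swap_coords m (Suc k) j) f) / (m (Suc k) - m j)
       = PP l lam k m f * (\<Sum>s\<in>fib l f j. 1 / (m (Suc k) - lam s))"
proof -
  define m' where "m' = swap_coords m (Suc k) j"
  have jl: "j \<in> {1..l}" using j kl by auto
  obtain s0 where s0: "s0 \<in> {1..l}" "f s0 = j" "{x\<in>{1..l}. f x = j} = {s0}"
    by (rule Pm_fiber[OF f jl])
  define T where "T = {x\<in>{1..l}. f x \<le> k} - {s0}"
  have TT: "{x\<in>{1..l}. f x \<le> k} = insert s0 T" using s0 j by (auto simp: T_def)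
  have s0T: "s0 \<notin> T" by (simp add: T_def)
  have fT: "\<And>x. x \<in> T \<Longrightarrow> f x \<noteq> j \<and> f x \<le> k"
  proof -
    fix x assume x: "x \<in> T"
    then have "x \<noteq> s0" "x \<in> {1..l}" "f x \<le> k" by (auto simp: T_def)
    moreover have "f x = j \<Longrightarrow> x \<in> {x\<in>{1..l}. f x = j}" using \<open>x \<in> {1..l}\<close> by simp
    ultimately show "f x \<noteq> j \<and> f x \<le> k" using s0(3) by blast
  qed
  have m'a: "\<And>a. a \<noteq> j \<Longrightarrow> a \<le> k \<Longrightarrow> m' a = m a" by (simp add: m'_def swap_coords_def)
  have m'j: "m' j = m (Suc k)" by (simp add: m'_def swap_coords_def)
  define R where "R = (\<Prod>x\<in>T. 1 / (m (f x) - lam x))"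
  have R': "(\<Prod>x\<in>T. 1 / (m' (f x) - lam x)) = R"
    unfolding R_def by (rule prod.cong) (simp_all add: fT m'a)
  have finT: "finite T" by (simp add: T_def)
  have P1: "PP l lam k m f = 1 / (m j - lam s0) * R"
    unfolding PP_def TT R_def using finT s0T s0(2) by simp
  have P2: "PP l lam k m' f = 1 / (m (Suc k) - lam s0) * R"
    unfolding PP_def TT using finT s0T s0(2) R' m'j by simp
  have fb: "fib l f j = {s0}" using s0 by (simp add: fib_def)
  have n1: "m j - lam s0 \<noteq> 0" "m (Suc k) - lam s0 \<noteq> 0" "m (Suc k) - m j \<noteq> 0"
    using nl s0(1) ne by auto
  have sg: "(\<Sum>s\<in>{s0}. 1 / (m (Suc k) - lam s)) = 1 / (m (Suc k) - lam s0)" by simp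
  show ?thesis unfolding m'_def[symmetric] P1 P2 fb sg
    by (rule alg_aux[OF n1])
qed

lemma GG_swap_diff:
  assumes j: "j \<in> {1..k}" and kl: "Suc k \<le> l"
    and ne: "m (Suc k) \<noteq> m j" and nl: "\<forall>s\<in>{1..l}. m j \<noteq> lam s \<and> m (Suc k) \<noteq> lam s"
  shows "(GG l lam k m - GG l lam k (swap_coords m (Suc k) j)) / (m (Suc k) - m j)
       = (\<Sum>f\<in>Pm l. PP l lam k m f * (\<Sum>s\<in>fib l f j. 1 / (m (Suc k) - lam s))) / of_nat (fact (l-k))"
proof -
  have "(GG l lam k m - GG l lam k (swap_coords m (Suc k) j)) / (m (Suc k) - m j)
     = (\<Sum>f\<in>Pm l. (PP l lam k m f - PP l lam k (swap_coords m (Suc k) j) f) / (m (Suc k) - m j))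
        / of_nat (fact (l-k))"
    unfolding GG_def by (simp add: sum_subtractf sum_divide_distrib[symmetric] diff_divide_distrib mult.commute)
  also have "\<dots> = (\<Sum>f\<in>Pm l. PP l lam k m f * (\<Sum>s\<in>fib l f j. 1 / (m (Suc k) - lam s))) / of_nat (fact (l-k))"
    by (rule arg_cong[where f="\<lambda>x. x / _"], rule sum.cong[OF refl], rule PP_swap_diff[OF _ j kl ne nl])
  finally show ?thesis .
qed

lemma GG_swap_high:
  assumes "k < i" "k < j"
  shows "GG l lam k (swap_coords m i j) = GG l lam k m"
proof -
  have "\<And>f. PP l lam k (swap_coords m i j) f = PP l lam k m f"
    unfolding PP_def by (rule prod.cong) (use assms in \<open>auto simp: swap_coords_def\<close>)
  then show ?thesis by (simp add: GG_def)
qed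

lemma GG_upd_high:
  assumes "k < i"
  shows "GG l lam k (m(i := t)) = GG l lam k m"
proof -
  have "\<And>f. PP l lam k (m(i := t)) f = PP l lam k m f"
    unfolding PP_def by (rule prod.cong) (use assms in auto)
  then show ?thesis by (simp add: GG_def)
qed

lemma GG_0: "GG l lam 0 m = 1"
proof -
  have "\<And>f. f \<in> Pm l \<Longrightarrow> PP l lam 0 m f = 1"
  proof -
    fix f assume f: "f \<in> Pm l"
    have E: "{j\<in>{1..l}. f j \<le> 0} = {}" using Pm_range[OF f] by force
    show "PP l lam 0 m f = 1" unfolding PP_def E by simp
  qed
  then show ?thesis by (simp add: GG_def card_Pm)
qed




lemma prod_deriv:
  fixes c :: "nat \<Rightarrow> complex"
  assumes "finite S" "\<forall>s\<in>S. x \<noteq> c s"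
  shows "((\<lambda>t. \<Prod>s\<in>S. t - c s) has_field_derivative
           (\<Prod>s\<in>S. x - c s) * (\<Sum>s\<in>S. 1 / (x - c s))) (at x)"
  using assms
proof (induction S rule: finite_induct)
  case empty
  then show ?case by simp
next
  case (insert a S)
  have ne: "x - c a \<noteq> 0" using insert.prems by auto
  have IH: "((\<lambda>t. \<Prod>s\<in>S. t - c s) has_field_derivative
           (\<Prod>s\<in>S. x - c s) * (\<Sum>s\<in>S. 1 / (x - c s))) (at x)"
    by (rule insert.IH) (use insert.prems in auto)
  have d1: "((\<lambda>t. t - c a) has_field_derivative 1) (at x)" by (auto intro!: derivative_eq_intros)
  have "((\<lambda>t. (t - c a) * (\<Prod>s\<in>S. t - c s)) has_field_derivative
       1 * (\<Prod>s\<in>S. x - c s) + ((\<Prod>s\<in>S. x - c s) * (\<Sum>s\<in>S. 1 / (x - c s))) * (x - c a)) (at x)"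
    by (rule DERIV_mult[OF d1 IH])
  moreover have "1 * (\<Prod>s\<in>S. x - c s) + ((\<Prod>s\<in>S. x - c s) * (\<Sum>s\<in>S. 1 / (x - c s))) * (x - c a)
     = ((x - c a) * (\<Prod>s\<in>S. x - c s)) * (1 / (x - c a) + (\<Sum>s\<in>S. 1 / (x - c s)))"
    using ne by (simp add: field_simps)
  ultimately show ?case using insert.hyps by simp
qed

lemma Delta_line:
  assumes i: "i \<in> {1..n}"
  shows "Delta n l (m(i := t)) lam
     = (\<Prod>s\<in>{1..l}. t - lam s) * (\<Prod>a\<in>{1..n} - {i}. \<Prod>s\<in>{1..l}. m a - lam s)"
proof -
  have "Delta n l (m(i := t)) lam = (\<Prod>s\<in>{1..l}. (m(i:=t)) i - lam s) *
           (\<Prod>a\<in>{1..n} - {i}. \<Prod>s\<in>{1..l}. (m(i:=t)) a - lam s)"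
    unfolding Delta_def by (rule prod.remove) (use i in auto)
  also have "(\<Prod>a\<in>{1..n} - {i}. \<Prod>s\<in>{1..l}. (m(i:=t)) a - lam s)
       = (\<Prod>a\<in>{1..n} - {i}. \<Prod>s\<in>{1..l}. m a - lam s)"
    by (rule prod.cong) auto
  finally show ?thesis by (simp only: fun_upd_same)
qed

lemma Delta_line_deriv:
  assumes i: "i \<in> {1..n}" and nl: "\<forall>s\<in>{1..l}. m i \<noteq> lam s"
  shows "((\<lambda>t. Delta n l (m(i := t)) lam) has_field_derivative
           Delta n l m lam * (\<Sum>s\<in>{1..l}. 1 / (m i - lam s))) (at (m i))"
proof -
  define C where "C = (\<Prod>a\<in>{1..n} - {i}. \<Prod>s\<in>{1..l}. m a - lam s)"
  have eq: "(\<lambda>t. Delta n l (m(i := t)) lam) = (\<lambda>t. (\<Prod>s\<in>{1..l}. t - lam s) * C)"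
    using Delta_line[OF i] by (simp add: C_def)
  have Dm: "Delta n l m lam = (\<Prod>s\<in>{1..l}. m i - lam s) * C"
    using Delta_line[OF i, where m=m and l=l and t="m i" and lam=lam] by (simp add: C_def)
  have "((\<lambda>t. (\<Prod>s\<in>{1..l}. t - lam s) * C) has_field_derivative
        ((\<Prod>s\<in>{1..l}. m i - lam s) * (\<Sum>s\<in>{1..l}. 1 / (m i - lam s))) * C) (at (m i))"
    by (rule DERIV_cmult_right, rule prod_deriv) (use nl in auto)
  then show ?thesis unfolding eq Dm by (simp add: ac_simps)
qed

lemma swap_coords_comp: "swap_coords m i j = m \<circ> Transposition.transpose i j"
  by (auto simp: swap_coords_def fun_eq_iff Transposition.transpose_def)

lemma Delta_swap:
  assumes "i \<in> {1..n}" "j \<in> {1..n}"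
  shows "Delta n l (swap_coords m i j) lam = Delta n l m lam"
proof -
  have p: "Transposition.transpose i j permutes {1..n}" using assms by (rule permutes_swap_id)
  show ?thesis unfolding Delta_def swap_coords_comp
    using prod.permute[OF p, of "\<lambda>a. \<Prod>s\<in>{1..l}. m a - lam s"] by (simp add: comp_def)
qed

definition UU :: "nat \<Rightarrow> nat \<Rightarrow> (nat \<Rightarrow> complex) \<Rightarrow> (nat \<Rightarrow> complex) set" where
  "UU n l lam = {m. (\<forall>i\<in>{1..n}. \<forall>j\<in>{1..n}. i \<noteq> j \<longrightarrow> m i \<noteq> m j)
      \<and> (\<forall>i\<in>{1..n}. \<forall>j\<in>{1..l}. m i \<noteq> lam j) \<and> Delta n l m lam \<notin> \<real>\<^sub>\<le>\<^sub>0}"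

lemma UU_swap:
  assumes m: "m \<in> UU n l lam" and ij: "i \<in> {1..n}" "j \<in> {1..n}"
  shows "swap_coords m i j \<in> UU n l lam"
proof -
  let ?t = "Transposition.transpose i j"
  have tin: "\<And>a. a \<in> {1..n} \<Longrightarrow> ?t a \<in> {1..n}" using ij by (auto simp: Transposition.transpose_def)
  have tinj: "\<And>a b. a \<noteq> b \<Longrightarrow> ?t a \<noteq> ?t b" by (metis transpose_involutory)
  have "Delta n l (m \<circ> ?t) lam = Delta n l m lam" using Delta_swap[OF ij] swap_coords_comp by metis
  then show ?thesis using m tin tinj unfolding UU_def
    by (auto simp: swap_coords_comp)
qed

lemma Delta_nonpos: "z \<in> complex_of_real ` {..0} \<longleftrightarrow> z \<in> \<real>\<^sub>\<le>\<^sub>0"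
  by (auto simp: nonpos_Reals_def)

lemma UU_line:
  assumes m: "m \<in> UU n l lam" and i: "i \<in> {1..n}"
  shows "eventually (\<lambda>t. m(i := t) \<in> UU n l lam) (nhds (m i))"
proof -
  have d: "\<forall>a\<in>{1..n}. \<forall>b\<in>{1..n}. a \<noteq> b \<longrightarrow> m a \<noteq> m b"
    and nl: "\<forall>a\<in>{1..n}. \<forall>s\<in>{1..l}. m a \<noteq> lam s"
    and nd: "Delta n l m lam \<notin> \<real>\<^sub>\<le>\<^sub>0" using m by (auto simp: UU_def)
  have e1: "eventually (\<lambda>t. \<forall>a\<in>{1..n} - {i}. t \<noteq> m a) (nhds (m i))"
    by (rule eventually_ball_finite) (use d i in \<open>auto intro!: t1_space_nhds\<close>)
  have e2: "eventually (\<lambda>t. \<forall>s\<in>{1..l}. t \<noteq> lam s) (nhds (m i))"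
    by (rule eventually_ball_finite) (use nl i in \<open>auto intro!: t1_space_nhds\<close>)
  have cont: "isCont (\<lambda>t. Delta n l (m(i := t)) lam) (m i)"
    using Delta_line_deriv[OF i, where l=l and m=m and lam=lam] nl i by (auto intro: DERIV_isCont)
  have "((\<lambda>t. Delta n l (m(i := t)) lam) \<longlongrightarrow> Delta n l m lam) (at (m i))"
    using cont by (simp add: isCont_def)
  then have "eventually (\<lambda>t. Delta n l (m(i := t)) lam \<in> - \<real>\<^sub>\<le>\<^sub>0) (at (m i))"
    by (rule topological_tendstoD) (use nd closed_nonpos_Reals_complex in auto)
  then have e3: "eventually (\<lambda>t. Delta n l (m(i := t)) lam \<notin> \<real>\<^sub>\<le>\<^sub>0) (nhds (m i))"
    using nd by (auto simp: eventually_nhds_conv_at)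
  show ?thesis
  proof (rule eventually_mono[OF eventually_conj[OF e1 eventually_conj[OF e2 e3]]])
    fix t assume t: "(\<forall>a\<in>{1..n} - {i}. t \<noteq> m a) \<and> (\<forall>s\<in>{1..l}. t \<noteq> lam s) \<and>
        Delta n l (m(i := t)) lam \<notin> \<real>\<^sub>\<le>\<^sub>0"
    have "\<forall>a\<in>{1..n}. \<forall>b\<in>{1..n}. a \<noteq> b \<longrightarrow> (m(i:=t)) a \<noteq> (m(i:=t)) b"
      using t d by (auto simp: fun_upd_def)
    moreover have "\<forall>a\<in>{1..n}. \<forall>s\<in>{1..l}. (m(i:=t)) a \<noteq> lam s" using t nl by auto
    ultimately show "m(i := t) \<in> UU n l lam" using t by (simp add: UU_def)
  qed
qed





lemma powr_m1_mult: "(z::complex) \<noteq> 0 \<Longrightarrow> z powr (k - 1) * z = z powr k"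
proof -
  assume z: "z \<noteq> 0"
  have "z powr (k - 1) * z powr 1 = z powr (k - 1 + 1)" by (simp only: powr_add)
  moreover have "z powr 1 = z" using z by (simp add: powr_def)
  ultimately show ?thesis by simp
qed

lemma line_deriv_F:
  assumes m: "m \<in> UU n l lam" and i: "i \<in> {1..n}"
  shows "((\<lambda>t. Delta n l (m(i := t)) lam powr kappa) has_field_derivative
          kappa * (\<Sum>s\<in>{1..l}. 1 / (m i - lam s)) * Delta n l m lam powr kappa) (at (m i))"
proof -
  have nl: "\<forall>s\<in>{1..l}. m i \<noteq> lam s" and nd: "Delta n l m lam \<notin> \<real>\<^sub>\<le>\<^sub>0"
    using m i by (auto simp: UU_def)
  have nz: "Delta n l m lam \<noteq> 0" using nd by auto
  have d: "((\<lambda>t. Delta n l (m(i := t)) lam) has_field_derivative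
           Delta n l m lam * (\<Sum>s\<in>{1..l}. 1 / (m i - lam s))) (at (m i))"
    by (rule Delta_line_deriv[where i=i and n=n and l=l and m=m and lam=lam, OF i nl])
  have nd': "(\<lambda>t. Delta n l (m(i := t)) lam) (m i) \<notin> \<real>\<^sub>\<le>\<^sub>0" using nd by simp
  define A where "A = (\<Sum>s\<in>{1..l}. 1 / (m i - lam s))"
  define DD where "DD = Delta n l m lam"
  have "((\<lambda>t. Delta n l (m(i := t)) lam powr kappa) has_field_derivative
      kappa * (\<lambda>t. Delta n l (m(i := t)) lam) (m i) powr (kappa - 1) *
        (Delta n l m lam * (\<Sum>s\<in>{1..l}. 1 / (m i - lam s)))) (at (m i))"
    by (rule has_field_derivative_powr[THEN DERIV_chain2, OF nd' d])
  then have d2: "((\<lambda>t. Delta n l (m(i := t)) lam powr kappa) has_field_derivative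
      kappa * DD powr (kappa - 1) * (DD * A)) (at (m i))"
    by (simp add: A_def DD_def)
  have "kappa * DD powr (kappa - 1) * (DD * A) = kappa * A * (DD powr (kappa - 1) * DD)"
    by (simp add: ac_simps)
  also have "\<dots> = kappa * A * DD powr kappa" using powr_m1_mult[OF nz, of kappa] by (simp add: DD_def)
  finally have eq: "kappa * DD powr (kappa - 1) * (DD * A) = kappa * A * DD powr kappa" .
  show ?thesis using d2 unfolding eq by (simp add: A_def DD_def)
qed

lemma main_ind:
  assumes nl: "n \<le> l"
  shows "k \<le> n \<Longrightarrow> \<forall>m\<in>UU n l lam.
     dunkl_seq n (- kappa) k (\<lambda>m. Delta n l m lam powr kappa) m
       = kappa ^ k * GG l lam k m * Delta n l m lam powr kappa"
proof (induction k)
  case 0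
  then show ?case by (simp add: GG_0)
next
  case (Suc k)
  define F where "F = (\<lambda>m. Delta n l m lam powr kappa)"
  define H where "H = dunkl_seq n (- kappa) k F"
  have IH: "\<And>m. m \<in> UU n l lam \<Longrightarrow> H m = kappa ^ k * GG l lam k m * F m"
    using Suc by (simp add: H_def F_def)
  have kn: "Suc k \<le> n" using Suc.prems .
  have kl: "Suc k \<le> l" using kn nl by simp
  have i: "Suc k \<in> {1..n}" using kn by simp
  show ?case
  proof
    fix m assume m: "m \<in> UU n l lam"
    define A where "A = (\<Sum>s\<in>{1..l}. 1 / (m (Suc k) - lam s))"
    define X where "X = (\<lambda>j. (\<Sum>f\<in>Pm l. PP l lam k m f * (\<Sum>s\<in>fib l f j. 1 / (m (Suc k) - lam s))))"
    define FF :: complex where "FF = of_nat (fact (l - k))"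
    have d: "m \<in> UU n l lam" using m .
    have dist: "\<forall>a\<in>{1..n}. \<forall>b\<in>{1..n}. a \<noteq> b \<longrightarrow> m a \<noteq> m b"
      and nlam: "\<forall>a\<in>{1..n}. \<forall>s\<in>{1..l}. m a \<noteq> lam s" using m by (auto simp: UU_def)
    have ev: "eventually (\<lambda>t. H (m(Suc k := t)) = kappa ^ k * GG l lam k m * F (m(Suc k := t))) (nhds (m (Suc k)))"
      using UU_line[OF m i] by (rule eventually_mono) (simp add: IH GG_upd_high)
    have "((\<lambda>t. kappa ^ k * GG l lam k m * F (m(Suc k := t))) has_field_derivative
        kappa ^ k * GG l lam k m * (kappa * A * F m)) (at (m (Suc k)))"
      unfolding F_def A_def by (rule DERIV_cmult, rule line_deriv_F[OF m i])
    then have D: "deriv (\<lambda>t. H (m(Suc k := t))) (m (Suc k)) = kappa ^ k * GG l lam k m * (kappa * A * F m)"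
      using deriv_cong_ev[OF ev refl] DERIV_imp_deriv by metis
    have trm: "(H m - H (swap_coords m (Suc k) j)) / (m (Suc k) - m j)
        = kappa ^ k * F m * ((GG l lam k m - GG l lam k (swap_coords m (Suc k) j)) / (m (Suc k) - m j))"
      if j: "j \<in> {1..n} - {Suc k}" for j
    proof -
      have jn: "j \<in> {1..n}" using j by simp
      have "H (swap_coords m (Suc k) j) = kappa ^ k * GG l lam k (swap_coords m (Suc k) j) * F m"
        using IH[OF UU_swap[OF m i jn]] Delta_swap[OF i jn] by (simp add: F_def)
      then have "H m - H (swap_coords m (Suc k) j)
          = kappa ^ k * F m * (GG l lam k m - GG l lam k (swap_coords m (Suc k) j))"
        using IH[OF m] by (simp add: algebra_simps)
      then show ?thesis by (simp only: times_divide_eq_right)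
    qed
    have S: "(\<Sum>j\<in>{1..n} - {Suc k}. (H m - H (swap_coords m (Suc k) j)) / (m (Suc k) - m j))
        = kappa ^ k * F m * (\<Sum>j\<in>{1..k}. X j / FF)"
    proof -
      have "(\<Sum>j\<in>{1..n} - {Suc k}. (H m - H (swap_coords m (Suc k) j)) / (m (Suc k) - m j))
          = (\<Sum>j\<in>{1..n} - {Suc k}. kappa ^ k * F m * ((GG l lam k m - GG l lam k (swap_coords m (Suc k) j)) / (m (Suc k) - m j)))"
        by (rule sum.cong[OF refl], rule trm)
      also have "\<dots> = (\<Sum>j\<in>{1..k}. kappa ^ k * F m * ((GG l lam k m - GG l lam k (swap_coords m (Suc k) j)) / (m (Suc k) - m j)))"
      proof (rule sum.mono_neutral_right)
        show "finite ({1..n} - {Suc k})" by simp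
        show "{1..k} \<subseteq> {1..n} - {Suc k}" using kn by auto
        show "\<forall>j\<in>{1..n} - {Suc k} - {1..k}. kappa ^ k * F m * ((GG l lam k m - GG l lam k (swap_coords m (Suc k) j)) / (m (Suc k) - m j)) = 0"
          by (auto simp: GG_swap_high)
      qed
      also have "\<dots> = (\<Sum>j\<in>{1..k}. kappa ^ k * F m * (X j / FF))"
      proof (rule sum.cong[OF refl])
        fix j assume j: "j \<in> {1..k}"
        have ne: "m (Suc k) \<noteq> m j" using dist i j kn by auto
        have nl2: "\<forall>s\<in>{1..l}. m j \<noteq> lam s \<and> m (Suc k) \<noteq> lam s" using nlam i j kn by auto
        show "kappa ^ k * F m * ((GG l lam k m - GG l lam k (swap_coords m (Suc k) j)) / (m (Suc k) - m j))
            = kappa ^ k * F m * (X j / FF)"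
          unfolding X_def FF_def GG_swap_diff[OF j kl ne nl2] ..
      qed
      also have "\<dots> = kappa ^ k * F m * (\<Sum>j\<in>{1..k}. X j / FF)"
        by (simp add: sum_distrib_left)
      finally show ?thesis .
    qed
    have C: "GG l lam k m * A - (\<Sum>j\<in>{1..k}. X j / FF) = GG l lam (Suc k) m"
      unfolding A_def X_def FF_def by (rule comb[OF kl refl])
    have "dunkl_seq n (- kappa) (Suc k) F m = dunkl n (- kappa) (Suc k) H m"
      by (simp add: H_def)
    also have "\<dots> = kappa ^ k * GG l lam k m * (kappa * A * F m) + (- kappa) * (kappa ^ k * F m * (\<Sum>j\<in>{1..k}. X j / FF))"
      unfolding dunkl_def D S ..
    also have "\<dots> = kappa ^ Suc k * F m * (GG l lam k m * A - (\<Sum>j\<in>{1..k}. X j / FF))"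
      by (simp only: power_Suc right_diff_distrib) (simp add: ac_simps)
    also have "\<dots> = kappa ^ Suc k * GG l lam (Suc k) m * F m"
      unfolding C by simp
    finally show "dunkl_seq n (- kappa) (Suc k) (\<lambda>m. Delta n l m lam powr kappa) m
       = kappa ^ Suc k * GG l lam (Suc k) m * Delta n l m lam powr kappa"
      by (simp add: F_def)
  qed
qed




lemma GG_Z1: "GG l lam (N - 1) mu = Z1 N l mu lam"
proof -
  have set: "{f. f \<in> {1..l} \<rightarrow>\<^sub>E {1..l} \<and> (\<forall>k\<in>{1..l}. card {j\<in>{1..l}. f j = k} = (\<lambda>_. 1) k)} = Pm l"
    by (simp add: Pm_def)
  have pr: "(\<Prod>j\<in>{1..l}. Z1_factor_coeff N mu lam j (f j)) = PP l lam (N - 1) mu f" for f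
    unfolding PP_def Z1_factor_coeff_def by (rule prod.inter_filter[symmetric]) simp
  show ?thesis unfolding Z1_def lin_prod_coeff_def set GG_def pr ..
qed


theorem lemma6p2:
  fixes N l :: nat and kappa :: complex and mu lam :: "nat \<Rightarrow> complex"
  assumes "N \<ge> 1" and "l \<ge> N - 1"
    and "\<forall>i\<in>{1..N-1}. \<forall>j\<in>{1..N-1}. i \<noteq> j \<longrightarrow> mu i \<noteq> mu j"
    and "\<forall>i\<in>{1..N-1}. \<forall>j\<in>{1..l}. mu i \<noteq> lam j"
    and "Delta (N - 1) l mu lam \<notin> complex_of_real ` {..0}"
  shows "Delta (N - 1) l mu lam powr (- kappa)
           * dunkl_seq (N - 1) (- kappa) (N - 1)
               (\<lambda>m. Delta (N - 1) l m lam powr kappa) mu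
         = kappa ^ (N - 1) * Z1 N l mu lam"
proof -
  have U: "mu \<in> UU (N - 1) l lam"
    using assms(3,4,5) by (simp add: UU_def Delta_nonpos)
  have main: "dunkl_seq (N - 1) (- kappa) (N - 1) (\<lambda>m. Delta (N - 1) l m lam powr kappa) mu
      = kappa ^ (N - 1) * GG l lam (N - 1) mu * Delta (N - 1) l mu lam powr kappa"
    using main_ind[OF assms(2) order_refl] U by blast
  have nz: "Delta (N - 1) l mu lam \<noteq> 0" using assms(5) by force
  have inv: "Delta (N - 1) l mu lam powr (- kappa) * Delta (N - 1) l mu lam powr kappa = 1"
    using nz by (simp add: powr_minus)
  have "Delta (N - 1) l mu lam powr (- kappa)
           * dunkl_seq (N - 1) (- kappa) (N - 1) (\<lambda>m. Delta (N - 1) l m lam powr kappa) mu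
      = kappa ^ (N - 1) * GG l lam (N - 1) mu
          * (Delta (N - 1) l mu lam powr (- kappa) * Delta (N - 1) l mu lam powr kappa)"
    unfolding main by (simp only: ac_simps)
  also have "\<dots> = kappa ^ (N - 1) * Z1 N l mu lam" unfolding inv GG_Z1 by simp
  finally show ?thesis .
qed

end
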